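(* Let $M$ be a $0/1$-matrix, let $B$ be a block of $M$, and let $i,j$ be two entries of the input boundary $B^-$ with $i<j$ (in the input-boundary order). Let $\sigma(i)$ be an entry of the output boundary $B^+$ that is reachable from $i$, and let $\sigma(j)$ be an entry of $B^+$ that is reachable from $j$. If $\sigma(j)<\sigma(i)$ (in the output-boundary order), then $\sigma(j)$ is also reachable from $i$ and $\sigma(i)$ is also reachable from $j$.
   Context: Let $M$ be an $m\times n$ $0/1$-matrix with entries indexed $(r,s)$, $1\le r\le m$ (rows, thought of as increasing from bottom to top), $1\le s\le n$ (columns, increasing from left to right). A path from $(k,l)$ to $(i,j)$ is a sequence of $1$-entries starting at $(k,l)$ and ending at $(i,j)$ in which each step goes from $(r,s)$ to $(r+1,s)$, $(r,s+1)$ or $(r+1,s+1)$; $(i,j)$ is reachable from $(k,l)$ if such a path exists. A block $B$ is the submatrix formed by a contiguous range of rows $r^-\le r\le r^+$ and a contiguous range of columns $s^-\le s\le s^+$. Its input boundary $B^-$ consists of the entries in row $r^-$ or column $s^-$ of $B$, ordered as follows: first the entries of row $r^-$ from column $s^+$ down to column $s^-$, then the remaining entries of column $s^-$ from row $r^-+1$ up to $r^+$. Its output boundary $B^+$ consists of the entries in row $r^+$ or column $s^+$ of $B$, ordered as follows: first the entries of column $s^+$ from row $r^-$ up to row $r^+$, then the remaining entries of row $r^+$ from column $s^+-1$ down to $s^-$. *)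

theory Defs
  imports Main
begin

(* An m x n 0/1-matrix is a function M :: nat => nat => nat; entries (r,s) with
   1 <= r <= m, 1 <= s <= n are meaningful. *)

definition entry_ok :: "nat \<Rightarrow> nat \<Rightarrow> (nat \<Rightarrow> nat \<Rightarrow> nat) \<Rightarrow> nat \<times> nat \<Rightarrow> bool" where
  "entry_ok m n M p \<longleftrightarrow> 1 \<le> fst p \<and> fst p \<le> m \<and> 1 \<le> snd p \<and> snd p \<le> n \<and> M (fst p) (snd p) = 1"

definition step :: "nat \<times> nat \<Rightarrow> nat \<times> nat \<Rightarrow> bool" where
  "step p q \<longleftrightarrow> q = (fst p + 1, snd p) \<or> q = (fst p, snd p + 1) \<or> q = (fst p + 1, snd p + 1)"

inductive reachable :: "nat \<Rightarrow> nat \<Rightarrow> (nat \<Rightarrow> nat \<Rightarrow> nat) \<Rightarrow> nat \<times> nat \<Rightarrow> nat \<times> nat \<Rightarrow> bool"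
  for m n M where
  refl: "entry_ok m n M p \<Longrightarrow> reachable m n M p p"
| step: "reachable m n M p q \<Longrightarrow> step q q' \<Longrightarrow> entry_ok m n M q' \<Longrightarrow> reachable m n M p q'"

definition input_boundary :: "nat \<Rightarrow> nat \<Rightarrow> nat \<Rightarrow> nat \<Rightarrow> (nat \<times> nat) list" where
  "input_boundary r1 r2 s1 s2 =
     map (\<lambda>s. (r1, s)) (rev [s1..<s2+1]) @ map (\<lambda>r. (r, s1)) [r1+1..<r2+1]"

definition output_boundary :: "nat \<Rightarrow> nat \<Rightarrow> nat \<Rightarrow> nat \<Rightarrow> (nat \<times> nat) list" where
  "output_boundary r1 r2 s1 s2 =
     map (\<lambda>r. (r, s2)) [r1..<r2+1] @ map (\<lambda>s. (r2, s)) (rev [s1..<s2])"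

end

theory Submission
  imports Defs
begin

lemma ib_len: "s1 \<le> s2 \<Longrightarrow> r1 \<le> r2 \<Longrightarrow> length (input_boundary r1 r2 s1 s2) = Suc (s2 - s1) + (r2 - r1)"
  by (auto simp: input_boundary_def)
lemma ob_len: "s1 \<le> s2 \<Longrightarrow> r1 \<le> r2 \<Longrightarrow> length (output_boundary r1 r2 s1 s2) = Suc (r2 - r1) + (s2 - s1)"
  by (simp add: output_boundary_def)
lemma ib_nth: "i < length (input_boundary r1 r2 s1 s2) \<Longrightarrow> s1 \<le> s2 \<Longrightarrow>
  input_boundary r1 r2 s1 s2 ! i = (if i \<le> s2 - s1 then (r1, s2 - i) else (r1 + (i - (s2 - s1)), s1))"
  by (auto simp: input_boundary_def nth_append rev_nth simp del: upt_Suc)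
lemma ob_nth: "i < length (output_boundary r1 r2 s1 s2) \<Longrightarrow> r1 \<le> r2 \<Longrightarrow>
  output_boundary r1 r2 s1 s2 ! i = (if i \<le> r2 - r1 then (r1 + i, s2) else (r2, s2 - (i - (r2 - r1))))"
  by (auto simp: output_boundary_def nth_append rev_nth simp del: upt_Suc)

context fixes m n :: nat and M :: "nat \<Rightarrow> nat \<Rightarrow> nat"
begin

lemma reach_ok: "reachable m n M p q \<Longrightarrow> entry_ok m n M p \<and> entry_ok m n M q"
  by (induction rule: reachable.induct) auto

lemma reach_mono: "reachable m n M p q \<Longrightarrow> fst p \<le> fst q \<and> snd p \<le> snd q"
  by (induction rule: reachable.induct) (auto simp: step_def)

lemma reach_trans: "reachable m n M q r \<Longrightarrow> reachable m n M p q \<Longrightarrow> reachable m n M p r"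
  by (induction rule: reachable.induct) (auto intro: reachable.step)

lemma reach_first: "reachable m n M p q \<Longrightarrow> p = q \<or> (\<exists>w. step p w \<and> reachable m n M w q)"
proof (induction rule: reachable.induct)
  case (refl p) then show ?case by simp
next
  case (step p q q')
  then show ?case by (metis reachable.refl reachable.step)
qed

lemma reach_vert: "reachable m n M p q \<Longrightarrow> snd p = snd q \<Longrightarrow> fst p \<le> r \<Longrightarrow> r \<le> fst q
   \<Longrightarrow> reachable m n M p (r, snd q) \<and> reachable m n M (r, snd q) q"
proof (induction rule: reachable.induct)
  case (refl p)
  then show ?case by (cases p) (auto intro: reachable.refl)
next
  case (step p q q')
  have m1: "snd p \<le> snd q" using reach_mono[OF step.hyps(1)] by simp
  have m2: "snd q \<le> snd q'" using step.hyps(2) by (auto simp: step_def)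
  have sq: "snd q = snd q'" using m1 m2 step.prems by simp
  have q': "q' = (fst q + 1, snd q)" using step.hyps(2) sq by (auto simp: step_def prod_eq_iff)
  show ?case
  proof (cases "r \<le> fst q")
    case True
    then have "reachable m n M p (r, snd q) \<and> reachable m n M (r, snd q) q"
      using step.IH step.prems sq by simp
    then show ?thesis using step.hyps sq by (auto intro: reachable.step)
  next
    case False
    then have "(r, snd q') = q'" using q' step.prems sq by (auto simp: prod_eq_iff)
    then show ?thesis using step.hyps by (auto intro: reachable.step reachable.refl)
  qed
qed

definition inP where "inP A C y \<longleftrightarrow> reachable m n M A y \<and> reachable m n M y C"
definition NW where "NW A C x \<longleftrightarrow> \<not> inP A C x \<and> (\<exists>y. inP A C y \<and> fst y \<le> fst x \<and> snd x \<le> snd y)"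

lemma walk:
  assumes AC: "reachable m n M A C" and bd: "snd C = s2 \<or> fst C = r2"
  shows "fst y < fst x \<Longrightarrow> inP A C y \<Longrightarrow> snd y = snd x \<Longrightarrow> \<not> inP A C x \<Longrightarrow> snd x < s2
     \<Longrightarrow> fst x \<le> r2 \<Longrightarrow> \<exists>w. inP A C w \<and> snd w = snd x + 1 \<and> fst w \<le> fst x"
proof (induction "fst x - fst y" arbitrary: y rule: less_induct)
  case less
  have "y \<noteq> C" using less.prems bd by auto
  then obtain w0 where st: "step y w0" and w0C: "reachable m n M w0 C"
    using reach_first less.prems(2) unfolding inP_def by blast
  have Aw0: "reachable m n M A w0"
    using less.prems(2) st reach_ok[OF w0C] unfolding inP_def by (blast intro: reachable.step)
  have inw0: "inP A C w0" using Aw0 w0C by (simp add: inP_def)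
  consider "w0 = (fst y + 1, snd y)" | "w0 = (fst y, snd y + 1)" | "w0 = (fst y + 1, snd y + 1)"
    using st by (auto simp: step_def)
  then show ?case
  proof cases
    case 1
    show ?thesis
    proof (cases "fst y + 1 = fst x")
      case True
      then have "w0 = x" using 1 less.prems by (simp add: prod_eq_iff)
      then show ?thesis using inw0 less.prems by simp
    next
      case False
      then show ?thesis using less.hyps[of w0] 1 less.prems inw0 by simp
    qed
  next
    case 2 then show ?thesis using inw0 less.prems by (intro exI[of _ w0]) simp
  next
    case 3 then show ?thesis using inw0 less.prems by (intro exI[of _ w0]) simp
  qed
qed

lemma closure:
  assumes AC: "reachable m n M A C" and bd: "snd C = s2 \<or> fst C = r2"
    and nw: "NW A C q" and st: "step q q'" and nq': "\<not> inP A C q'"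
    and b1: "fst q \<le> r2" and b2: "snd q' \<le> s2"
  shows "NW A C q'"
proof -
  obtain y where y: "inP A C y" "fst y \<le> fst q" "snd q \<le> snd y" and nq: "\<not> inP A C q"
    using nw unfolding NW_def by blast
  consider "q' = (fst q + 1, snd q)" | "q' = (fst q, snd q + 1)" | "q' = (fst q + 1, snd q + 1)"
    using st by (auto simp: step_def)
  then show ?thesis
  proof cases
    case 1 then show ?thesis using y nq' unfolding NW_def by (intro conjI exI[of _ y]) auto
  next
    case 2
    show ?thesis
    proof (cases "snd q + 1 \<le> snd y")
      case True then show ?thesis using y nq' 2 unfolding NW_def by (intro conjI exI[of _ y]) auto
    next
      case False
      then have sy: "snd y = snd q" using y by simp
      have "y \<noteq> q" using y nq by auto
      then have "fst y < fst q" using sy y by (auto simp: prod_eq_iff)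
      then obtain w where "inP A C w" "snd w = snd q + 1" "fst w \<le> fst q"
        using walk[OF AC bd, of y q] y sy nq b1 b2 2 by auto
      then show ?thesis using nq' 2 unfolding NW_def by (intro conjI exI[of _ w]) auto
    qed
  next
    case 3
    show ?thesis
    proof (cases "snd q + 1 \<le> snd y")
      case True then show ?thesis using y nq' 3 unfolding NW_def by (intro conjI exI[of _ y]) auto
    next
      case False
      then have sy: "snd y = snd q" using y by simp
      have "y \<noteq> q" using y nq by auto
      then have "fst y < fst q" using sy y by (auto simp: prod_eq_iff)
      then obtain w where "inP A C w" "snd w = snd q + 1" "fst w \<le> fst q"
        using walk[OF AC bd, of y q] y sy nq b1 b2 3 by auto
      then show ?thesis using nq' 3 unfolding NW_def by (intro conjI exI[of _ w]) auto
    qed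
  qed
qed

lemma crossQ:
  assumes AC: "reachable m n M A C" and bd: "snd C = s2 \<or> fst C = r2"
  shows "reachable m n M x q \<Longrightarrow> fst q \<le> r2 \<Longrightarrow> snd q \<le> s2 \<Longrightarrow> inP A C x \<or> NW A C x
    \<Longrightarrow> (\<exists>z. inP A C z \<and> reachable m n M x z \<and> reachable m n M z q) \<or> NW A C q"
proof (induction rule: reachable.induct)
  case (refl p)
  then show ?case unfolding inP_def by (metis reachable.refl)
next
  case (step p q q')
  have bq: "fst q \<le> r2" "snd q \<le> s2" using step.hyps(2) step.prems by (auto simp: step_def)
  from step.IH[OF bq step.prems(3)] show ?case
  proof
    assume "\<exists>z. inP A C z \<and> reachable m n M p z \<and> reachable m n M z q"
    then show ?thesis using step.hyps by (blast intro: reachable.step)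
  next
    assume nw: "NW A C q"
    show ?thesis
    proof (cases "inP A C q'")
      case True
      then show ?thesis using step.hyps by (blast intro: reachable.step reachable.refl)
    next
      case False
      then show ?thesis using closure[OF AC bd nw step.hyps(2) False bq(1) step.prems(2)] by blast
    qed
  qed
qed

end

theorem mainTheorem3:
  fixes m n :: nat and M :: "nat \<Rightarrow> nat \<Rightarrow> nat"
    and r1 r2 s1 s2 :: nat and a b c d :: nat
  assumes zero_one: "\<forall>r s. 1 \<le> r \<and> r \<le> m \<and> 1 \<le> s \<and> s \<le> n \<longrightarrow> M r s \<in> {0, 1}"
    and block: "1 \<le> r1" "r1 \<le> r2" "r2 \<le> m" "1 \<le> s1" "s1 \<le> s2" "s2 \<le> n"
    and ij: "a < b" "b < length (input_boundary r1 r2 s1 s2)"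
    and sig: "d < c" "c < length (output_boundary r1 r2 s1 s2)"
    and reach_i: "reachable m n M (input_boundary r1 r2 s1 s2 ! a) (output_boundary r1 r2 s1 s2 ! c)"
    and reach_j: "reachable m n M (input_boundary r1 r2 s1 s2 ! b) (output_boundary r1 r2 s1 s2 ! d)"
  shows "reachable m n M (input_boundary r1 r2 s1 s2 ! a) (output_boundary r1 r2 s1 s2 ! d)
       \<and> reachable m n M (input_boundary r1 r2 s1 s2 ! b) (output_boundary r1 r2 s1 s2 ! c)"
proof -
  define A where "A = input_boundary r1 r2 s1 s2 ! a"
  define B where "B = input_boundary r1 r2 s1 s2 ! b"
  define C where "C = output_boundary r1 r2 s1 s2 ! c"
  define D where "D = output_boundary r1 r2 s1 s2 ! d"
  have Aeq: "A = (if a \<le> s2 - s1 then (r1, s2 - a) else (r1 + (a - (s2 - s1)), s1))"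
    unfolding A_def using ib_nth[of a] ij block by simp
  have Beq: "B = (if b \<le> s2 - s1 then (r1, s2 - b) else (r1 + (b - (s2 - s1)), s1))"
    unfolding B_def using ib_nth[of b] ij block by simp
  have Ceq: "C = (if c \<le> r2 - r1 then (r1 + c, s2) else (r2, s2 - (c - (r2 - r1))))"
    unfolding C_def using ob_nth[of c] sig block by simp
  have Deq: "D = (if d \<le> r2 - r1 then (r1 + d, s2) else (r2, s2 - (d - (r2 - r1))))"
    unfolding D_def using ob_nth[of d] sig block by simp
  have lenO: "c < Suc (r2 - r1) + (s2 - s1)" using sig ob_len block by metis
  have AC: "reachable m n M A C" using reach_i A_def C_def by simp
  have BD: "reachable m n M B D" using reach_j B_def D_def by simp
  have bd: "snd C = s2 \<or> fst C = r2" using Ceq by auto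
  have AB: "fst A \<le> fst B \<and> snd B \<le> snd A" using Aeq Beq ij block by auto
  have Dbd: "fst D \<le> r2" "snd D \<le> s2" using Deq block sig by auto
  have start: "inP m n M A C B \<or> NW m n M A C B"
    using AB AC reach_ok[OF AC] unfolding NW_def inP_def by (blast intro: reachable.refl)
  have endp: "inP m n M A C D \<or> \<not> NW m n M A C D"
  proof (cases "NW m n M A C D")
    case False then show ?thesis by simp
  next
    case True
    then obtain y where y: "inP m n M A C y" "fst y \<le> fst D" "snd D \<le> snd y"
      unfolding NW_def by blast
    have yC: "fst y \<le> fst C \<and> snd y \<le> snd C" using y(1) reach_mono unfolding inP_def by blast
    have dle: "d \<le> r2 - r1" "c \<le> r2 - r1"
      using Deq Ceq yC y sig lenO by (auto split: if_splits)
    then have sy: "snd y = snd C" using Ceq Deq yC y by auto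
    have "reachable m n M y D \<and> reachable m n M D C"
      using reach_vert[of m n M y C "fst D"] y yC sy Ceq Deq dle sig unfolding inP_def by auto
    then show ?thesis using y reach_trans unfolding inP_def by blast
  qed
  have "(\<exists>z. inP m n M A C z \<and> reachable m n M B z \<and> reachable m n M z D) \<or> NW m n M A C D"
    using crossQ[OF AC bd BD Dbd start] .
  then obtain z where z: "inP m n M A C z" "reachable m n M B z" "reachable m n M z D"
    using endp BD by (metis NW_def reachable.refl reach_ok)
  have "reachable m n M A D" "reachable m n M B C"
    using z reach_trans unfolding inP_def by blast+
  then show ?thesis using A_def B_def C_def D_def by simp
qed

end
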